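(* Let $\alpha$ be a curve in $\mathbb{E}^n$ given by $\alpha(t)=\rho(t)y(t)$, where $\rho$ is an arbitrary positive function and $y$ is an arclength parameterized curve in the unit hypersphere $\mathbb{S}^{n-1}(1)=\{p\in\mathbb{E}^n:\langle p,p\rangle=1\}$. Then $\alpha$ is a rectifying curve (with respect to the origin, i.e. $\langle\alpha(t),N(t)\rangle=0$ for all $t$) if and only if $\rho(t)=\frac{a}{\cos(t+t_0)}$ for some $a\in\mathbb{R}\setminus\{0\}$ and $t_0\in\mathbb{R}$.
   Context: For a (regular, sufficiently differentiable) curve $\alpha$ in $\mathbb{E}^n$ with speed $v=\|\alpha'\|$, the Frenet frame $T,N,B_1,\dots,B_{n-2}$ is orthonormal with $T=\alpha'/v$ and satisfies $T'=v\kappa_1N$, $N'=v(-\kappa_1T+\kappa_2B_1)$, etc., with $\kappa_1>0$; in particular $N$ is the unit vector in the direction of $T'$. A curve $\alpha$ is a rectifying curve if the orthogonal complement of $N$ contains a fixed point at every parameter; here the fixed point is the origin, i.e. $\langle\alpha,N\rangle\equiv0$. *)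

theory Defs
  imports "HOL-Analysis.Analysis"
begin

fun vderiv_n :: "nat \<Rightarrow> (real \<Rightarrow> 'a::real_normed_vector) \<Rightarrow> real \<Rightarrow> 'a" where
  "vderiv_n 0 f = f"
| "vderiv_n (Suc k) f = (\<lambda>t. vector_derivative (vderiv_n k f) (at t))"

definition smooth_on :: "real set \<Rightarrow> (real \<Rightarrow> 'a::real_normed_vector) \<Rightarrow> bool" where
  "smooth_on I f \<longleftrightarrow> (\<forall>k. \<forall>t\<in>I. vderiv_n k f differentiable (at t))"

definition tangent :: "(real \<Rightarrow> 'a::real_normed_vector) \<Rightarrow> real \<Rightarrow> 'a" where
  "tangent \<alpha> t = sgn (vector_derivative \<alpha> (at t))"

definition normal :: "(real \<Rightarrow> 'a::real_normed_vector) \<Rightarrow> real \<Rightarrow> 'a" where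
  "normal \<alpha> t = sgn (vector_derivative (tangent \<alpha>) (at t))"

definition rectifying_on :: "real set \<Rightarrow> (real \<Rightarrow> 'a::real_inner) \<Rightarrow> bool" where
  "rectifying_on I \<alpha> \<longleftrightarrow> (\<forall>t\<in>I. inner (\<alpha> t) (normal \<alpha> t) = 0)"

end

theory Submission
  imports Defs
begin


lemma ode_fwd:
  fixes I :: "real set" and \<rho> r1 r2 :: "real \<Rightarrow> real"
  assumes I: "open I" "connected I"
    and pos: "\<forall>t\<in>I. \<rho> t > 0"
    and d0: "\<And>t. t \<in> I \<Longrightarrow> (\<rho> has_real_derivative r1 t) (at t)"
    and d1: "\<And>t. t \<in> I \<Longrightarrow> (r1 has_real_derivative r2 t) (at t)"
    and ode: "\<forall>t\<in>I. \<rho> t * r2 t = (\<rho> t)\<^sup>2 + 2 * (r1 t)\<^sup>2"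
  shows "\<exists>a t0. a \<noteq> 0 \<and> (\<forall>t\<in>I. \<rho> t = a / cos (t + t0))"
proof (cases "I = {}")
  case True then show ?thesis by (intro exI[of _ 1]) auto
next
  case False
  then obtain s where s: "s \<in> I" by auto
  define w where "w = (\<lambda>t. 1 / \<rho> t)"
  define w1 where "w1 = (\<lambda>t. - r1 t / (\<rho> t)\<^sup>2)"
  have dw: "(w has_real_derivative w1 t) (at t)" if "t \<in> I" for t
    unfolding w_def w1_def using pos that
    by (auto intro!: derivative_eq_intros d0 simp: power2_eq_square)
  have dw1: "(w1 has_real_derivative (2 * (r1 t)\<^sup>2 - \<rho> t * r2 t) / (\<rho> t)^3) (at t)" if "t \<in> I" for t
  proof -
    have "\<rho> t > 0" using pos that by auto
    show ?thesis unfolding w1_def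
      by (rule derivative_eq_intros d0 d1 that refl | use \<open>\<rho> t > 0\<close> in \<open>simp add: field_simps power2_eq_square power3_eq_cube\<close>)+
  qed
  have key: "w t + (2 * (r1 t)\<^sup>2 - \<rho> t * r2 t) / (\<rho> t)^3 = 0" if "t \<in> I" for t
  proof -
    have "\<rho> t > 0" using pos that by auto
    then show ?thesis using ode that unfolding w_def
      by (simp add: field_simps power2_eq_square power3_eq_cube)
  qed
  define P where "P = (\<lambda>t. w t * cos t - w1 t * sin t)"
  define Q where "Q = (\<lambda>t. w t * sin t + w1 t * cos t)"
  have dP: "(P has_real_derivative 0) (at t)" if "t \<in> I" for t
  proof -
    have "(P has_real_derivative (w1 t * cos t - w t * sin t - ((2 * (r1 t)\<^sup>2 - \<rho> t * r2 t) / (\<rho> t)^3 * sin t + w1 t * cos t))) (at t)"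
      unfolding P_def by (auto intro!: derivative_eq_intros dw dw1 that)
    moreover have "w1 t * cos t - w t * sin t - ((2 * (r1 t)\<^sup>2 - \<rho> t * r2 t) / (\<rho> t)^3 * sin t + w1 t * cos t) = - (w t + (2 * (r1 t)\<^sup>2 - \<rho> t * r2 t) / (\<rho> t)^3) * sin t"
      by (simp add: algebra_simps)
    ultimately show ?thesis using key[OF that] by simp
  qed
  have dQ: "(Q has_real_derivative 0) (at t)" if "t \<in> I" for t
  proof -
    have "(Q has_real_derivative (w1 t * sin t + w t * cos t + ((2 * (r1 t)\<^sup>2 - \<rho> t * r2 t) / (\<rho> t)^3 * cos t - w1 t * sin t))) (at t)"
      unfolding Q_def by (auto intro!: derivative_eq_intros dw dw1 that)
    moreover have "w1 t * sin t + w t * cos t + ((2 * (r1 t)\<^sup>2 - \<rho> t * r2 t) / (\<rho> t)^3 * cos t - w1 t * sin t) = (w t + (2 * (r1 t)\<^sup>2 - \<rho> t * r2 t) / (\<rho> t)^3) * cos t"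
      by (simp add: algebra_simps)
    ultimately show ?thesis using key[OF that] by simp
  qed
  have cP: "continuous_on I P"
    by (rule continuous_at_imp_continuous_on) (use dP DERIV_isCont in blast)
  have cQ: "continuous_on I Q"
    by (rule continuous_at_imp_continuous_on) (use dQ DERIV_isCont in blast)
  obtain c1 where c1: "\<And>t. t \<in> I \<Longrightarrow> P t = c1"
    using DERIV_zero_connected_constant[OF I(2) I(1) finite.emptyI cP] dP by blast
  obtain c2 where c2: "\<And>t. t \<in> I \<Longrightarrow> Q t = c2"
    using DERIV_zero_connected_constant[OF I(2) I(1) finite.emptyI cQ] dQ by blast
  have wrep: "w t = c1 * cos t + c2 * sin t" if "t \<in> I" for t
  proof -
    have "c1 * cos t + c2 * sin t = P t * cos t + Q t * sin t" using c1 c2 that by simp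
    also have "\<dots> = w t * ((sin t)\<^sup>2 + (cos t)\<^sup>2)" unfolding P_def Q_def power2_eq_square by algebra
    finally show ?thesis by simp
  qed
  define R where "R = sqrt (c1\<^sup>2 + c2\<^sup>2)"
  have "c1 \<noteq> 0 \<or> c2 \<noteq> 0"
    using wrep[OF s] pos s unfolding w_def by auto
  then have Rpos: "R > 0" unfolding R_def by (auto intro: add_pos_nonneg add_nonneg_pos)
  have "(c1 / R)\<^sup>2 + (- c2 / R)\<^sup>2 = 1"
    using Rpos unfolding R_def by (auto simp: power_divide add_divide_distrib[symmetric])
  then obtain th where th: "c1 / R = cos th" "- c2 / R = sin th" by (rule sincos_total_2pi)
  show ?thesis
  proof (intro exI conjI ballI)
    show "1 / R \<noteq> 0" using Rpos by simp
    fix t assume t: "t \<in> I"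
    have "R * cos (t + th) = R * (cos t * cos th - sin t * sin th)" by (simp add: cos_add)
    also have "\<dots> = c1 * cos t + c2 * sin t" proof -
      have e: "R * cos th = c1" "R * sin th = - c2" using th Rpos by (auto simp: field_simps)
      have "R * (cos t * cos th - sin t * sin th) = cos t * (R * cos th) - sin t * (R * sin th)" by algebra
      then show ?thesis unfolding e by simp
    qed
    also have "\<dots> = 1 / \<rho> t" using wrep[OF t] unfolding w_def by simp
    finally have "R * cos (t + th) = 1 / \<rho> t" .
    then show "\<rho> t = 1 / R / cos (t + th)" using Rpos pos t
      by (auto simp: field_simps)
  qed
qed



lemma ode_bwd:
  fixes I :: "real set" and \<rho> r1 r2 :: "real \<Rightarrow> real"
  assumes I: "open I"
    and pos: "\<forall>t\<in>I. \<rho> t > 0"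
    and d0: "\<And>t. t \<in> I \<Longrightarrow> (\<rho> has_real_derivative r1 t) (at t)"
    and d1: "\<And>t. t \<in> I \<Longrightarrow> (r1 has_real_derivative r2 t) (at t)"
    and form: "\<forall>t\<in>I. \<rho> t = a / cos (t + t0)"
  shows "\<forall>t\<in>I. \<rho> t * r2 t = (\<rho> t)\<^sup>2 + 2 * (r1 t)\<^sup>2"
proof
  have cnz: "cos (t + t0) \<noteq> 0" if "t \<in> I" for t
    using pos form that by fastforce
  have r1f: "r1 t = a * sin (t + t0) / (cos (t + t0))\<^sup>2" if t: "t \<in> I" for t
  proof -
    have "((\<lambda>s. a / cos (s + t0)) has_real_derivative a * sin (t + t0) / (cos (t + t0))\<^sup>2) (at t)"
      using cnz[OF t] by (auto intro!: derivative_eq_intros simp: power2_eq_square)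
    then have "(\<rho> has_real_derivative a * sin (t + t0) / (cos (t + t0))\<^sup>2) (at t)"
      by (rule has_field_derivative_transform_within_open[OF _ I t]) (use form in auto)
    then show ?thesis using d0[OF t] DERIV_unique by blast
  qed
  fix t assume t: "t \<in> I"
  have "((\<lambda>s. a * sin (s + t0) / (cos (s + t0))\<^sup>2) has_real_derivative
      (a * cos (t + t0) * (cos (t + t0))\<^sup>2 + a * sin (t + t0) * (2 * cos (t + t0) * sin (t + t0))) / ((cos (t + t0))\<^sup>2)\<^sup>2) (at t)"
    using cnz[OF t] by (auto intro!: derivative_eq_intros simp: power2_eq_square)
  then have "(r1 has_real_derivative
      (a * cos (t + t0) * (cos (t + t0))\<^sup>2 + a * sin (t + t0) * (2 * cos (t + t0) * sin (t + t0))) / ((cos (t + t0))\<^sup>2)\<^sup>2) (at t)"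
    by (rule has_field_derivative_transform_within_open[OF _ I t]) (use r1f in auto)
  then have r2f: "r2 t = (a * cos (t + t0) * (cos (t + t0))\<^sup>2 + a * sin (t + t0) * (2 * cos (t + t0) * sin (t + t0))) / ((cos (t + t0))\<^sup>2)\<^sup>2"
    using d1[OF t] DERIV_unique by blast
  show "\<rho> t * r2 t = (\<rho> t)\<^sup>2 + 2 * (r1 t)\<^sup>2"
    unfolding r2f r1f[OF t] form[rule_format, OF t] using cnz[OF t]
    by (simp add: field_simps power2_eq_square)
qed



lemma geo:
  fixes I :: "real set" and \<rho> r1 r2 :: "real \<Rightarrow> real" and y y1 :: "real \<Rightarrow> 'a::real_inner"
  assumes I: "open I"
    and pos: "\<forall>t\<in>I. \<rho> t > 0"
    and d0: "\<And>t. t \<in> I \<Longrightarrow> (\<rho> has_real_derivative r1 t) (at t)"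
    and d1: "\<And>t. t \<in> I \<Longrightarrow> (r1 has_real_derivative r2 t) (at t)"
    and dy: "\<And>t. t \<in> I \<Longrightarrow> (y has_vector_derivative y1 t) (at t)"
    and dy1: "\<And>t. t \<in> I \<Longrightarrow> y1 differentiable (at t)"
    and sph: "\<forall>t\<in>I. inner (y t) (y t) = 1"
    and arc: "\<forall>t\<in>I. norm (y1 t) = 1"
    and kappa: "\<forall>t\<in>I. vector_derivative (tangent (\<lambda>s. \<rho> s *\<^sub>R y s)) (at t) \<noteq> 0"
  shows "rectifying_on I (\<lambda>s. \<rho> s *\<^sub>R y s) \<longleftrightarrow> (\<forall>t\<in>I. \<rho> t * r2 t = (\<rho> t)\<^sup>2 + 2 * (r1 t)\<^sup>2)"
proof -
  define \<alpha> where "\<alpha> = (\<lambda>s. \<rho> s *\<^sub>R y s)"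
  have yy1: "inner (y t) (y1 t) = 0" if t: "t \<in> I" for t
  proof -
    have "((\<lambda>s. inner (y s) (y s)) has_vector_derivative inner (y t) (y1 t) + inner (y1 t) (y t)) (at t)"
      by (rule bounded_bilinear.has_vector_derivative[OF bounded_bilinear_inner dy[OF t] dy[OF t]])
    then have "((\<lambda>s. 1::real) has_vector_derivative inner (y t) (y1 t) + inner (y1 t) (y t)) (at t)"
      by (rule has_vector_derivative_transform_within_open[OF _ I t]) (use sph in auto)
    then have "inner (y t) (y1 t) + inner (y1 t) (y t) = 0"
      using vector_derivative_unique_at has_vector_derivative_const by blast
    then show ?thesis by (simp add: inner_commute)
  qed
  define A where "A = (\<lambda>s. r1 s *\<^sub>R y s + \<rho> s *\<^sub>R y1 s)"
  define v where "v = (\<lambda>s. sqrt ((r1 s)\<^sup>2 + (\<rho> s)\<^sup>2))"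
  have qpos: "(r1 t)\<^sup>2 + (\<rho> t)\<^sup>2 > 0" if "t \<in> I" for t
    using pos that by (intro add_nonneg_pos) auto
  have vpos: "v t > 0" if "t \<in> I" for t
    using qpos[OF that] unfolding v_def by simp
  have dal: "(\<alpha> has_vector_derivative A t) (at t)" if t: "t \<in> I" for t
    unfolding \<alpha>_def A_def
    by (rule has_vector_derivative_eq_rhs[OF has_vector_derivative_scaleR[OF d0[OF t] dy[OF t]]])
       (simp add: algebra_simps)
  have innA: "inner (A t) (A t) = (v t)\<^sup>2" if t: "t \<in> I" for t
  proof -
    have "inner (y1 t) (y1 t) = 1" using arc t by (simp add: power2_norm_eq_inner[symmetric])
    then show ?thesis using yy1[OF t] sph t unfolding A_def v_def
      by (simp add: inner_add inner_commute power2_eq_square algebra_simps)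
  qed
  have normA: "norm (A t) = v t" if t: "t \<in> I" for t
    using innA[OF t] vpos[OF t] by (metis norm_eq_sqrt_inner real_sqrt_unique less_imp_le)
  define Tf where "Tf = (\<lambda>s. (1 / v s) *\<^sub>R A s)"
  have tanI: "tangent \<alpha> s = Tf s" if "s \<in> I" for s
    unfolding tangent_def Tf_def using vector_derivative_at[OF dal[OF that]] normA[OF that]
    by (simp add: sgn_div_norm divide_inverse_commute)
  define vD where "vD = (\<lambda>t. (r1 t * r2 t + \<rho> t * r1 t) / v t)"
  have dv: "(v has_real_derivative vD t) (at t)" if t: "t \<in> I" for t
  proof -
    have q: "(r1 t)\<^sup>2 + (\<rho> t)\<^sup>2 > 0" using qpos[OF t] .
    have dq: "((\<lambda>s. (r1 s)\<^sup>2 + (\<rho> s)\<^sup>2) has_real_derivative (2 * r1 t * r2 t + 2 * \<rho> t * r1 t)) (at t)"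
      by (auto intro!: derivative_eq_intros d0 d1 t)
    have "(v has_real_derivative (inverse (sqrt ((r1 t)\<^sup>2 + (\<rho> t)\<^sup>2)) / 2) * (2 * r1 t * r2 t + 2 * \<rho> t * r1 t)) (at t)"
      unfolding v_def by (rule DERIV_chain2[OF DERIV_real_sqrt[OF q] dq])
    moreover have "(inverse (sqrt ((r1 t)\<^sup>2 + (\<rho> t)\<^sup>2)) / 2) * (2 * r1 t * r2 t + 2 * \<rho> t * r1 t) = vD t"
    proof -
      have gen: "\<And>S x y z. (S::real) > 0 \<Longrightarrow> inverse S / 2 * (2 * x * y + 2 * z * x) = (x * y + z * x) / S" by (simp add: field_simps)
      have sq: "sqrt ((r1 t)\<^sup>2 + (\<rho> t)\<^sup>2) > 0" using q by simp
      show ?thesis unfolding vD_def v_def by (rule gen[OF sq])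
    qed
    ultimately show ?thesis by simp
  qed
  define gD where "gD = (\<lambda>t. (((r1 t)\<^sup>2 + \<rho> t * r2 t) * v t - \<rho> t * r1 t * vD t) / (v t)\<^sup>2)"
  have dg: "((\<lambda>s. \<rho> s * r1 s / v s) has_real_derivative gD t) (at t)" if t: "t \<in> I" for t
    unfolding gD_def using vpos[OF t]
    by (auto intro!: derivative_eq_intros d0 d1 dv t simp: power2_eq_square algebra_simps)
  have gen: "(((a * V - b / V) / V\<^sup>2 = V) \<longleftrightarrow> (a * q - b = q\<^sup>2))"
    if "V > 0" "V\<^sup>2 = q" for V a b q :: real
  proof -
    have "((a * V - b / V) / V\<^sup>2 = V) \<longleftrightarrow> (a * V\<^sup>2 - b = V\<^sup>2 * V\<^sup>2)"
      using that(1) by (simp add: field_simps power2_eq_square)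
    then show ?thesis using that(2) by (simp add: power2_eq_square)
  qed
  have pt: "inner (\<alpha> t) (normal \<alpha> t) = 0 \<longleftrightarrow> \<rho> t * r2 t = (\<rho> t)\<^sup>2 + 2 * (r1 t)\<^sup>2" if t: "t \<in> I" for t
  proof -
    obtain y2 where dy2: "(y1 has_vector_derivative y2) (at t)"
      using dy1[OF t] vector_derivative_works by blast
    have dA: "(A has_vector_derivative (r1 t *\<^sub>R y1 t + r2 t *\<^sub>R y t) + (\<rho> t *\<^sub>R y2 + r1 t *\<^sub>R y1 t)) (at t)"
      unfolding A_def
      by (rule has_vector_derivative_add[OF has_vector_derivative_scaleR[OF d1[OF t] dy[OF t]] has_vector_derivative_scaleR[OF d0[OF t] dy2]])
    have dinv: "((\<lambda>s. 1 / v s) has_real_derivative (0 * v t - 1 * vD t) / (v t * v t)) (at t)"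
      by (rule DERIV_divide[OF DERIV_const dv[OF t]]) (use vpos[OF t] in auto)
    obtain D where dT: "(Tf has_vector_derivative D) (at t)"
      using has_vector_derivative_scaleR[OF dinv dA] unfolding Tf_def by blast
    have dtan: "(tangent \<alpha> has_vector_derivative D) (at t)"
      by (rule has_vector_derivative_transform_within_open[OF dT I t]) (simp add: tanI)
    have Dnz: "D \<noteq> 0"
      using kappa t vector_derivative_at[OF dtan] unfolding \<alpha>_def by auto
    have nrm: "normal \<alpha> t = sgn D"
      unfolding normal_def using vector_derivative_at[OF dtan] by simp
    have dI: "((\<lambda>s. inner (\<alpha> s) (Tf s)) has_vector_derivative inner (\<alpha> t) D + inner (A t) (Tf t)) (at t)"
      by (rule bounded_bilinear.has_vector_derivative[OF bounded_bilinear_inner dal[OF t] dT])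
    have eqI: "inner (\<alpha> s) (Tf s) = \<rho> s * r1 s / v s" if s: "s \<in> I" for s
      unfolding \<alpha>_def Tf_def A_def using yy1[OF s] sph s
      by (simp add: inner_add_right)
    have dI2: "((\<lambda>s. \<rho> s * r1 s / v s) has_vector_derivative inner (\<alpha> t) D + inner (A t) (Tf t)) (at t)"
      by (rule has_vector_derivative_transform_within_open[OF dI I t]) (simp add: eqI)
    have e1: "inner (\<alpha> t) D + inner (A t) (Tf t) = gD t"
      using vector_derivative_unique_at[OF dI2 dg[OF t, unfolded has_real_derivative_iff_has_vector_derivative]] .
    have e2: "inner (A t) (Tf t) = v t"
      unfolding Tf_def using innA[OF t] vpos[OF t] by (simp add: power2_eq_square)
    have "inner (\<alpha> t) (normal \<alpha> t) = 0 \<longleftrightarrow> inner (\<alpha> t) D = 0"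
      unfolding nrm sgn_div_norm using Dnz by (simp add: inner_scaleR_right)
    also have "\<dots> \<longleftrightarrow> gD t = v t" using e1 e2 by auto
    also have "\<dots> \<longleftrightarrow> ((r1 t)\<^sup>2 + \<rho> t * r2 t) * ((r1 t)\<^sup>2 + (\<rho> t)\<^sup>2) - \<rho> t * r1 t * (r1 t * r2 t + \<rho> t * r1 t) = ((r1 t)\<^sup>2 + (\<rho> t)\<^sup>2)\<^sup>2"
    proof -
      have "gD t = ((((r1 t)\<^sup>2 + \<rho> t * r2 t) * v t - (\<rho> t * r1 t * (r1 t * r2 t + \<rho> t * r1 t)) / v t) / (v t)\<^sup>2)"
        unfolding gD_def vD_def by simp
      moreover have "(v t)\<^sup>2 = (r1 t)\<^sup>2 + (\<rho> t)\<^sup>2" unfolding v_def using qpos[OF t] by simp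
      ultimately show ?thesis using gen[OF vpos[OF t]] by simp
    qed
    also have "\<dots> \<longleftrightarrow> (\<rho> t)\<^sup>2 * (\<rho> t * r2 t - (\<rho> t)\<^sup>2 - 2 * (r1 t)\<^sup>2) = 0"
      by (simp add: algebra_simps power2_eq_square)
    also have "\<dots> \<longleftrightarrow> \<rho> t * r2 t = (\<rho> t)\<^sup>2 + 2 * (r1 t)\<^sup>2"
      using pos t by auto
    finally show ?thesis .
  qed
  show ?thesis unfolding rectifying_on_def \<alpha>_def[symmetric] using pt by blast
qed


theorem theorem4p5:
  fixes I :: "real set" and \<rho> :: "real \<Rightarrow> real" and y :: "real \<Rightarrow> real ^ 'n"
  assumes I: "open I" "connected I"
    and \<rho>_smooth: "smooth_on I \<rho>" and \<rho>_pos: "\<forall>t\<in>I. \<rho> t > 0"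
    and y_smooth: "smooth_on I y"
    and y_sphere: "\<forall>t\<in>I. inner (y t) (y t) = 1"
    and y_arclength: "\<forall>t\<in>I. norm (vector_derivative y (at t)) = 1"
    and regular: "\<forall>t\<in>I. vector_derivative (\<lambda>s. \<rho> s *\<^sub>R y s) (at t) \<noteq> 0"
    and kappa_pos: "\<forall>t\<in>I. vector_derivative (tangent (\<lambda>s. \<rho> s *\<^sub>R y s)) (at t) \<noteq> 0"
  shows "rectifying_on I (\<lambda>s. \<rho> s *\<^sub>R y s) \<longleftrightarrow>
         (\<exists>a t0. a \<noteq> 0 \<and> (\<forall>t\<in>I. \<rho> t = a / cos (t + t0)))"
proof -
  define r1 where "r1 = (\<lambda>t. vector_derivative \<rho> (at t))"
  define r2 where "r2 = (\<lambda>t. vector_derivative r1 (at t))"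
  define y1 where "y1 = (\<lambda>t. vector_derivative y (at t))"
  have sr: "\<And>k t. t \<in> I \<Longrightarrow> vderiv_n k \<rho> differentiable (at t)"
    using \<rho>_smooth unfolding smooth_on_def by blast
  have sy: "\<And>k t. t \<in> I \<Longrightarrow> vderiv_n k y differentiable (at t)"
    using y_smooth unfolding smooth_on_def by blast
  have s0: "\<rho> differentiable (at t)" "r1 differentiable (at t)"
     "y differentiable (at t)" "y1 differentiable (at t)" if "t \<in> I" for t
  proof -
    show "\<rho> differentiable (at t)" using sr[of t 0] that by simp
    show "r1 differentiable (at t)" using sr[of t "Suc 0"] that unfolding r1_def by simp
    show "y differentiable (at t)" using sy[of t 0] that by simp
    show "y1 differentiable (at t)" using sy[of t "Suc 0"] that unfolding y1_def by simp
  qed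
  have d0: "(\<rho> has_real_derivative r1 t) (at t)" if "t \<in> I" for t
    using s0(1)[OF that] unfolding r1_def has_real_derivative_iff_has_vector_derivative
    by (simp add: vector_derivative_works)
  have d1: "(r1 has_real_derivative r2 t) (at t)" if "t \<in> I" for t
    using s0(2)[OF that] unfolding r2_def has_real_derivative_iff_has_vector_derivative
    by (simp add: vector_derivative_works)
  have dy: "(y has_vector_derivative y1 t) (at t)" if "t \<in> I" for t
    using s0(3)[OF that] unfolding y1_def by (simp add: vector_derivative_works)
  have arc: "\<forall>t\<in>I. norm (y1 t) = 1" using y_arclength unfolding y1_def by simp
  have G: "rectifying_on I (\<lambda>s. \<rho> s *\<^sub>R y s) \<longleftrightarrow> (\<forall>t\<in>I. \<rho> t * r2 t = (\<rho> t)\<^sup>2 + 2 * (r1 t)\<^sup>2)"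
    by (rule geo[OF I(1) \<rho>_pos d0 d1 dy s0(4) y_sphere arc kappa_pos])
  show ?thesis
    unfolding G using ode_fwd[OF I \<rho>_pos d0 d1] ode_bwd[OF I(1) \<rho>_pos d0 d1] by blast
qed

end
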